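(* Let $(Q,\mathbf z)$ be a model for a tropical Plücker vector $\pi_\bullet\in\mathrm{Dr}(k,n)$. Then for every $v\in V(Q)$ such that $M_v$ is nonempty, $M_v=M(\pi^{-\mathbf b_v}_\bullet)$, and in particular $M_v$ is a matroid.
   Context: $Q$ is a finite loopless directed graph with labeled vertices $\mathbf z=(z_1,\dots,z_n)\in V(Q)^n$; directed distance $\delta(v,w)$ is the minimal walk cost where an edge is traversed forwards at cost 1 and backwards at cost $k-1$ (assumed finite, with $\delta(v,w)=1,\delta(w,v)=k-1$ for each edge $v\to w$). $(Q,\mathbf z)$ is a model for $\pi_\bullet\in\mathbb R^{\binom{[n]}k}$ if $\pi_I=-\frac1k\min_{x\in V(Q)}\sum_{i\in I}\delta(x,z_i)$ for all $I$; $v$ is a distance minimizer for $I$ if it attains this minimum. $M_v=\{I\in\binom{[n]}k: v\text{ is a distance minimizer for }I\}$. $\mathbf b_v=\frac1k(\delta(v,z_1),\dots,\delta(v,z_n))$. $\mathrm{Dr}(k,n)$: vectors such that for all $S\in\binom{[n]}{k-2}$ and $a<b<c<d\notin S$, $\min(\pi_{Sab}+\pi_{Scd},\pi_{Sac}+\pi_{Sbd},\pi_{Sad}+\pi_{Sbc})$ is attained twice. $\pi^{\mathbf x}_I=\pi_I-\sum_{i\in I}x_i$ and $M(\pi^{\mathbf x}_\bullet)=\{I:\pi^{\mathbf x}_I=\min_J\pi^{\mathbf x}_J\}$. *)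

theory Defs
  imports Complex_Main
begin

inductive walk :: "('v \<Rightarrow> 'v \<Rightarrow> bool) \<Rightarrow> nat \<Rightarrow> 'v \<Rightarrow> 'v \<Rightarrow> nat \<Rightarrow> bool"
  for E :: "'v \<Rightarrow> 'v \<Rightarrow> bool" and k :: nat where
  walk_nil: "walk E k u u 0"
| walk_fwd: "E u x \<Longrightarrow> walk E k x w c \<Longrightarrow> walk E k u w (1 + c)"
| walk_bwd: "E x u \<Longrightarrow> walk E k x w c \<Longrightarrow> walk E k u w ((k - 1) + c)"

definition ddist :: "('v \<Rightarrow> 'v \<Rightarrow> bool) \<Rightarrow> nat \<Rightarrow> 'v \<Rightarrow> 'v \<Rightarrow> nat" where
  "ddist E k u w = (LEAST c. walk E k u w c)"

definition ksubsets :: "nat \<Rightarrow> nat \<Rightarrow> nat set set" where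
  "ksubsets k n = {I. I \<subseteq> {1..n} \<and> card I = k}"

definition min_attained_twice :: "real \<Rightarrow> real \<Rightarrow> real \<Rightarrow> bool" where
  "min_attained_twice x y z \<longleftrightarrow>
     (x = y \<and> x \<le> z) \<or> (x = z \<and> x \<le> y) \<or> (y = z \<and> y \<le> x)"

definition Dr :: "nat \<Rightarrow> nat \<Rightarrow> (nat set \<Rightarrow> real) set" where
  "Dr k n = {\<pi>. \<forall>S a b c d. S \<subseteq> {1..n} \<and> int (card S) + 2 = int k \<and>
       a \<in> {1..n} - S \<and> b \<in> {1..n} - S \<and> c \<in> {1..n} - S \<and> d \<in> {1..n} - S \<and>
       a < b \<and> b < c \<and> c < d \<longrightarrow>
       min_attained_twice (\<pi> (S \<union> {a,b}) + \<pi> (S \<union> {c,d}))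
                          (\<pi> (S \<union> {a,c}) + \<pi> (S \<union> {b,d}))
                          (\<pi> (S \<union> {a,d}) + \<pi> (S \<union> {b,c}))}"

definition dsum :: "('v \<Rightarrow> 'v \<Rightarrow> bool) \<Rightarrow> nat \<Rightarrow> (nat \<Rightarrow> 'v) \<Rightarrow> 'v \<Rightarrow> nat set \<Rightarrow> real" where
  "dsum E k z x I = (\<Sum>i\<in>I. real (ddist E k x (z i)))"

definition is_model :: "'v set \<Rightarrow> ('v \<Rightarrow> 'v \<Rightarrow> bool) \<Rightarrow> nat \<Rightarrow> nat \<Rightarrow> (nat \<Rightarrow> 'v)
    \<Rightarrow> (nat set \<Rightarrow> real) \<Rightarrow> bool" where
  "is_model V E k n z \<pi> \<longleftrightarrow>
     (\<forall>I\<in>ksubsets k n. \<pi> I = - (1 / real k) * Min ((\<lambda>x. dsum E k z x I) ` V))"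

definition Mv :: "'v set \<Rightarrow> ('v \<Rightarrow> 'v \<Rightarrow> bool) \<Rightarrow> nat \<Rightarrow> nat \<Rightarrow> (nat \<Rightarrow> 'v) \<Rightarrow> 'v \<Rightarrow> nat set set" where
  "Mv V E k n z v = {I \<in> ksubsets k n. dsum E k z v I = Min ((\<lambda>x. dsum E k z x I) ` V)}"

definition bvec :: "('v \<Rightarrow> 'v \<Rightarrow> bool) \<Rightarrow> nat \<Rightarrow> (nat \<Rightarrow> 'v) \<Rightarrow> 'v \<Rightarrow> nat \<Rightarrow> real" where
  "bvec E k z v i = real (ddist E k v (z i)) / real k"

definition shift :: "(nat set \<Rightarrow> real) \<Rightarrow> (nat \<Rightarrow> real) \<Rightarrow> nat set \<Rightarrow> real" where
  "shift \<pi> x I = \<pi> I - (\<Sum>i\<in>I. x i)"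

definition Mmin :: "nat \<Rightarrow> nat \<Rightarrow> (nat set \<Rightarrow> real) \<Rightarrow> nat set set" where
  "Mmin k n \<pi> = {I \<in> ksubsets k n. \<pi> I = Min (\<pi> ` ksubsets k n)}"

definition matroid_bases :: "'a set \<Rightarrow> 'a set set \<Rightarrow> bool" where
  "matroid_bases G \<B> \<longleftrightarrow> \<B> \<noteq> {} \<and> (\<forall>B\<in>\<B>. B \<subseteq> G) \<and>
     (\<forall>B1\<in>\<B>. \<forall>B2\<in>\<B>. \<forall>e\<in>B1 - B2. \<exists>f\<in>B2 - B1. insert f (B1 - {e}) \<in> \<B>)"

end

theory Submission
  imports Defs
begin

lemma mat_sym1: "min_attained_twice x y z = min_attained_twice y x z"
  by (auto simp: min_attained_twice_def)
lemma mat_sym2: "min_attained_twice x y z = min_attained_twice x z y"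
  by (auto simp: min_attained_twice_def)

lemma rel_all:
  fixes \<pi> :: "nat set \<Rightarrow> real"
  assumes Dr: "\<pi> \<in> Dr k n" and T: "T \<subseteq> {1..n}" "card T + 2 = k"
    and a: "a \<in> {1..n} - T" and b: "b \<in> {1..n} - T"
    and c: "c \<in> {1..n} - T" and d: "d \<in> {1..n} - T"
    and dist: "distinct [a,b,c,d]"
  shows "min_attained_twice (\<pi>(T\<union>{a,b})+\<pi>(T\<union>{c,d})) (\<pi>(T\<union>{a,c})+\<pi>(T\<union>{b,d})) (\<pi>(T\<union>{a,d})+\<pi>(T\<union>{b,c}))"
proof -
  define R where "R = (\<lambda>a b c d. min_attained_twice (\<pi>(T\<union>{a,b})+\<pi>(T\<union>{c,d})) (\<pi>(T\<union>{a,c})+\<pi>(T\<union>{b,d})) (\<pi>(T\<union>{a,d})+\<pi>(T\<union>{b,c})))"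
  define U where "U = {1..n} - T"
  have s1: "R a b c d = R b a c d" for a b c d
    unfolding R_def min_attained_twice_def by (simp add: insert_commute; linarith)
  have s2: "R a b c d = R a c b d" for a b c d
    unfolding R_def min_attained_twice_def by (simp add: insert_commute; linarith)
  have s3: "R a b c d = R a b d c" for a b c d
    unfolding R_def min_attained_twice_def by (simp add: insert_commute; linarith)
  have st: "R a b c d" if "a < b" "b < c" "c < d" "a \<in> U" "b \<in> U" "c \<in> U" "d \<in> U" for a b c d
    using Dr that T unfolding Dr_def R_def U_def by auto
  have st1: "R a b c d" if "b < c" "c < d" "a \<noteq> b" "a \<noteq> c" "a \<noteq> d" "a \<in> U" "b \<in> U" "c \<in> U" "d \<in> U" for a b c d
  proof -
    have "a < b \<or> (b < a \<and> a < c) \<or> (c < a \<and> a < d) \<or> d < a" using that by linarith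
    then consider "a < b" | "b < a \<and> a < c" | "c < a \<and> a < d" | "d < a" by blast
    then show ?thesis
    proof cases
      case 1 then show ?thesis using st that by blast
    next
      case 2 then show ?thesis using st[of b a c d] that s1 by auto
    next
      case 3 then show ?thesis using st[of b c a d] that s1 s2 by metis
    next
      case 4 then show ?thesis using st[of b c d a] that s1 s2 s3 by metis
    qed
  qed
  have st2: "R a b c d" if "c < d" "distinct [a,b,c,d]" "a \<in> U" "b \<in> U" "c \<in> U" "d \<in> U" for a b c d
  proof -
    have "b \<noteq> c" "b \<noteq> d" using that by auto
    then have "b < c \<or> (c < b \<and> b < d) \<or> d < b" using that by linarith
    then consider "b < c" | "c < b \<and> b < d" | "d < b" by blast
    then show ?thesis
    proof cases
      case 1 then show ?thesis using st1 that by auto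
    next
      case 2 then show ?thesis using st1[of c b d a] that s2 by auto
    next
      case 3 then show ?thesis using st1[of c d b a] that s2 s3 by (metis distinct_length_2_or_more)
    qed
  qed
  have "R a b c d"
  proof (cases "c < d")
    case True then show ?thesis using st2 dist a b c d U_def by auto
  next
    case False then have "d < c" using dist by auto
    then show ?thesis using st2[of d c a b] dist a b c d U_def s3 by auto
  qed
  then show ?thesis unfolding R_def .
qed

lemma card_diff_sym:
  assumes "finite A" "finite B" "card A = card B"
  shows "card (A - B) = card (B - A)"
  using assms by (simp add: card_Diff_subset_Int Int_commute)

lemma VE:
  fixes \<pi> :: "nat set \<Rightarrow> real"
  assumes Dr: "\<pi> \<in> Dr k n" and B2: "B2 \<in> ksubsets k n" and e2: "e \<notin> B2"
  shows "B1 \<in> ksubsets k n \<Longrightarrow> e \<in> B1 \<Longrightarrow> card (B1 - B2) = d \<Longrightarrow>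
    \<exists>f\<in>B2-B1. \<pi>(insert f (B1-{e})) + \<pi>(insert e (B2-{f})) \<le> \<pi> B1 + \<pi> B2"
proof (induction d arbitrary: B1 rule: less_induct)
  case (less d B1)
  have B1s: "B1 \<subseteq> {1..n}" "card B1 = k" using less.prems(1) by (auto simp: ksubsets_def)
  have B2s: "B2 \<subseteq> {1..n}" "card B2 = k" using B2 by (auto simp: ksubsets_def)
  have fin1: "finite B1" using B1s(1) finite_subset by blast
  have fin2: "finite B2" using B2s(1) finite_subset by blast
  have cd: "card (B2 - B1) = d" using card_diff_sym[OF fin1 fin2] B1s B2s less.prems by simp
  have eD: "e \<in> B1 - B2" using less.prems e2 by auto
  have d1: "d \<ge> 1" using eD fin1 less.prems(3) by (metis One_nat_def Suc_leI card_gt_0_iff empty_iff finite_Diff)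
  show ?case
  proof (cases "d = 1")
    case True
    obtain f where f: "B2 - B1 = {f}" using cd True card_1_singletonE by blast
    have "B1 - B2 = {e}" using eD less.prems(3) True card_1_singletonE by (metis singletonD)
    then have "insert f (B1-{e}) = B2" "insert e (B2-{f}) = B1" using f eD by blast+
    then show ?thesis using f by auto
  next
    case False
    show ?thesis
    proof (rule ccontr)
      assume neg: "\<not> ?thesis"
      then have fail: "\<pi> B1 + \<pi> B2 < \<pi>(insert f (B1-{e})) + \<pi>(insert e (B2-{f}))" if "f \<in> B2 - B1" for f
        using that neg by (meson not_le)
      have "card (B1 - B2 - {e}) = d - 1" using eD less.prems(3) fin1 by simp
      then have "B1 - B2 - {e} \<noteq> {}" using False d1 by (metis card.empty diff_is_0_eq le_antisym)
      then obtain a where a: "a \<in> B1 - B2" "a \<noteq> e" by blast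
      define D where "D = B2 - B1"
      have finD: "finite D" using fin2 D_def by simp
      have neD: "D \<noteq> {}" using cd d1 D_def by (metis card.empty not_one_le_zero)
      define q where "q = (\<lambda>g. \<pi>(insert g (B1-{a})) - \<pi>(insert g (B1-{e})))"
      obtain g0 where g0: "g0 \<in> D" "q g0 = Min (q ` D)" proof -
        have "Min (q ` D) \<in> q ` D" using Min_in[of "q ` D"] finD neD by auto
        then show ?thesis using that by (metis imageE)
      qed
      have g0min: "q g0 \<le> q g" if "g \<in> D" for g using g0(2) Min_le finD that by simp
      define Y where "Y = insert g0 (B1 - {a})"
      have g0n: "g0 \<in> B2" "g0 \<notin> B1" using g0 D_def by auto
      have cY: "card Y = k"
      proof -
        have c1: "card (B1 - {a}) = card B1 - 1" using a fin1 by (simp add: card_Diff_singleton)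
        have c2: "card B1 > 0" using a fin1 card_gt_0_iff by blast
        have c3: "card Y = Suc (card (B1-{a}))" unfolding Y_def using fin1 g0n by (simp add: card_insert_disjoint)
        show ?thesis using c1 c2 c3 B1s(2) by linarith
      qed
      have Yk: "Y \<in> ksubsets k n" using cY B1s B2s g0n unfolding ksubsets_def Y_def by auto
      have eY: "e \<in> Y" using a eD Y_def by auto
      have "Y - B2 = B1 - B2 - {a}" using g0n a unfolding Y_def by auto
      then have cYB: "card (Y - B2) = d - 1" using a less.prems(3) fin1 by simp
      have dlt: "d - 1 < d" using d1 by simp
      obtain g where g: "g \<in> B2 - Y"
        and ih: "\<pi>(insert g (Y-{e})) + \<pi>(insert e (B2-{g})) \<le> \<pi> Y + \<pi> B2"
        using less.IH[OF dlt Yk eY cYB] by blast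
      have gn: "g \<in> B2" "g \<notin> B1" "g \<noteq> g0" using g a unfolding Y_def by auto
      define T where "T = B1 - {a,e}"
      have Tsub: "T \<subseteq> {1..n}" using B1s T_def by auto
      have cT: "card T + 2 = k"
      proof -
        have "card T = card B1 - 2" unfolding T_def using a eD fin1
          by (subst card_Diff_subset) auto
        moreover have "card B1 \<ge> 2"
        proof -
          have "{a,e} \<subseteq> B1" using a eD by auto
          then have "card {a,e} \<le> card B1" using fin1 card_mono by blast
          then show ?thesis using a by simp
        qed
        ultimately show ?thesis using B1s by simp
      qed
      have mem: "a \<in> {1..n} - T" "e \<in> {1..n} - T" "g0 \<in> {1..n} - T" "g \<in> {1..n} - T"
        using a eD B1s B2s g0n gn T_def by auto
      have dist: "distinct [a,e,g0,g]" using a eD g0n gn by auto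
      have rel: "min_attained_twice (\<pi>(T\<union>{a,e})+\<pi>(T\<union>{g0,g})) (\<pi>(T\<union>{a,g0})+\<pi>(T\<union>{e,g})) (\<pi>(T\<union>{a,g})+\<pi>(T\<union>{e,g0}))"
        using rel_all[OF Dr Tsub cT mem dist] .
      have h1: "T\<union>{a,e} = B1" using a eD T_def by auto
      have h2: "T\<union>{g0,g} = insert g (Y-{e})" using a eD gn g0n T_def Y_def by auto
      have h3: "T\<union>{a,g0} = insert g0 (B1-{e})" using a eD gn g0n T_def by auto
      have h4: "T\<union>{e,g} = insert g (B1-{a})" using a eD gn g0n T_def by auto
      have h5: "T\<union>{a,g} = insert g (B1-{e})" using a eD gn g0n T_def by auto
      have h6: "T\<union>{e,g0} = Y" using a eD gn g0n T_def Y_def by auto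
      have f1: "\<pi> B1 + \<pi> B2 < \<pi>(insert g (B1-{e})) + \<pi>(insert e (B2-{g}))"
        using fail gn by auto
      have m1: "q g0 \<le> q g" using g0min gn D_def by auto
      show False using rel ih f1 m1 unfolding h1 h2 h3 h4 h5 h6 q_def min_attained_twice_def Y_def
        by linarith
    qed
  qed
qed

lemma ksub_exch:
  assumes "B \<in> ksubsets k n" "x \<in> B" "y \<notin> B" "y \<in> {1..n}"
  shows "insert y (B - {x}) \<in> ksubsets k n"
proof -
  have B: "B \<subseteq> {1..n}" "card B = k" using assms(1) by (auto simp: ksubsets_def)
  have fin: "finite B" using B(1) finite_subset by blast
  have c1: "card (B - {x}) = card B - 1" using assms(2) fin by (simp add: card_Diff_singleton)
  have c2: "card B > 0" using assms(2) fin card_gt_0_iff by blast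
  have c3: "card (insert y (B - {x})) = Suc (card (B-{x}))" using fin assms(3) by (simp add: card_insert_disjoint)
  have "card (insert y (B - {x})) = k" using c1 c2 c3 B(2) by linarith
  then show ?thesis using B assms unfolding ksubsets_def by auto
qed

lemma sum_exch:
  fixes w :: "nat \<Rightarrow> real"
  assumes "finite B" "x \<in> B" "y \<notin> B"
  shows "sum w (insert y (B - {x})) = sum w B - w x + w y"
proof -
  have "sum w (insert y (B - {x})) = w y + sum w (B - {x})" using assms by (simp add: sum.insert)
  also have "sum w (B - {x}) = sum w B - w x" using assms by (simp add: sum_diff1)
  finally show ?thesis by simp
qed

theorem proposition3p9:
  fixes V :: "'v set" and E :: "'v \<Rightarrow> 'v \<Rightarrow> bool" and k n :: nat
    and z :: "nat \<Rightarrow> 'v" and \<pi> :: "nat set \<Rightarrow> real" and v :: 'v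
  assumes finV: "finite V"
    and E_in_V: "\<And>a b. E a b \<Longrightarrow> a \<in> V \<and> b \<in> V"
    and loopless: "\<And>a. \<not> E a a"
    and k_pos: "1 \<le> k"
    and dist_finite: "\<And>a b. a \<in> V \<Longrightarrow> b \<in> V \<Longrightarrow> \<exists>c. walk E k a b c"
    and edge_dist: "\<And>a b. E a b \<Longrightarrow> ddist E k a b = 1 \<and> ddist E k b a = k - 1"
    and z_in_V: "\<And>i. i \<in> {1..n} \<Longrightarrow> z i \<in> V"
    and Dr: "\<pi> \<in> Dr k n"
    and model: "is_model V E k n z \<pi>"
    and vV: "v \<in> V"
    and Mv_ne: "Mv V E k n z v \<noteq> {}"
  shows "Mv V E k n z v = Mmin k n (shift \<pi> (\<lambda>i. - bvec E k z v i))
         \<and> matroid_bases {1..n} (Mv V E k n z v)"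
proof -
  define K where "K = ksubsets k n"
  define s where "s = shift \<pi> (\<lambda>i. - bvec E k z v i)"
  define MI where "MI = (\<lambda>I. Min ((\<lambda>x. dsum E k z x I) ` V))"
  have finK: "finite K" unfolding K_def ksubsets_def
    by (rule finite_subset[of _ "Pow {1..n}"]) auto
  have kpos: "real k > 0" using k_pos by simp
  have sI: "s I = (dsum E k z v I - MI I) / real k" if "I \<in> K" for I
  proof -
    have p: "\<pi> I = - (1 / real k) * MI I" using model that unfolding is_model_def K_def MI_def by auto
    have "(\<Sum>i\<in>I. - bvec E k z v i) = - (dsum E k z v I / real k)"
      unfolding bvec_def dsum_def by (simp add: sum_negf sum_divide_distrib)
    then have "s I = \<pi> I + dsum E k z v I / real k" unfolding s_def shift_def by simp
    then show ?thesis using p kpos by (simp add: field_simps)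
  qed
  have MIle: "MI I \<le> dsum E k z v I" for I
    unfolding MI_def using finV vV by (intro Min_le) auto
  have s_nonneg: "s I \<ge> 0" if "I \<in> K" for I
    using sI[OF that] MIle[of I] kpos by simp
  have s_zero: "s I = 0 \<longleftrightarrow> I \<in> Mv V E k n z v" if "I \<in> K" for I
    using sI[OF that] MIle[of I] kpos that unfolding Mv_def MI_def K_def by auto
  obtain I0 where I0: "I0 \<in> Mv V E k n z v" using Mv_ne by blast
  have I0K: "I0 \<in> K" using I0 unfolding Mv_def K_def by auto
  have minz: "Min (s ` K) = 0"
  proof (rule Min_eqI)
    show "finite (s ` K)" using finK by simp
    show "\<And>y. y \<in> s ` K \<Longrightarrow> 0 \<le> y" using s_nonneg by auto
    show "0 \<in> s ` K" using I0K s_zero[OF I0K] I0 by force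
  qed
  have MvK: "Mv V E k n z v \<subseteq> K" unfolding Mv_def K_def by auto
  have part1: "Mv V E k n z v = Mmin k n s"
    unfolding Mmin_def minz K_def[symmetric] using s_zero MvK by auto
  have part2: "matroid_bases {1..n} (Mv V E k n z v)"
    unfolding matroid_bases_def
  proof (intro conjI ballI)
    show "Mv V E k n z v \<noteq> {}" by (rule Mv_ne)
  next
    fix B assume "B \<in> Mv V E k n z v"
    then show "B \<subseteq> {1..n}" unfolding Mv_def ksubsets_def by auto
  next
    fix B1 B2 e assume B1: "B1 \<in> Mv V E k n z v" and B2: "B2 \<in> Mv V E k n z v" and e: "e \<in> B1 - B2"
    have B1K: "B1 \<in> K" and B2K: "B2 \<in> K" using B1 B2 MvK by auto
    obtain f where f: "f \<in> B2 - B1"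
      and ve: "\<pi>(insert f (B1-{e})) + \<pi>(insert e (B2-{f})) \<le> \<pi> B1 + \<pi> B2"
      using VE[OF Dr B2K[unfolded K_def], of e B1 "card (B1 - B2)"] e B1K unfolding K_def by auto
    have fin1: "finite B1" and fin2: "finite B2" using B1K B2K finK unfolding K_def ksubsets_def
      by (auto intro: finite_subset)
    have f1n: "f \<in> {1..n}" and e1n: "e \<in> {1..n}" using f e B1K B2K unfolding K_def ksubsets_def by auto
    have B1'K: "insert f (B1-{e}) \<in> K" using ksub_exch[of B1 k n e f] B1K e f f1n unfolding K_def by auto
    have B2'K: "insert e (B2-{f}) \<in> K" using ksub_exch[of B2 k n f e] B2K e f e1n unfolding K_def by auto
    define w where "w = (\<lambda>i. - bvec E k z v i)"
    have sdef: "s I = \<pi> I - sum w I" for I unfolding s_def shift_def w_def by simp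
    have w1: "sum w (insert f (B1-{e})) = sum w B1 - w e + w f" using sum_exch fin1 e f by auto
    have w2: "sum w (insert e (B2-{f})) = sum w B2 - w f + w e" using sum_exch fin2 e f by auto
    have z1: "s B1 = 0" using s_zero[OF B1K] B1 by simp
    have z2: "s B2 = 0" using s_zero[OF B2K] B2 by simp
    have "s (insert f (B1-{e})) + s (insert e (B2-{f})) \<le> s B1 + s B2"
      unfolding sdef w1 w2 using ve by linarith
    then have "s (insert f (B1-{e})) = 0"
      using z1 z2 s_nonneg[OF B1'K] s_nonneg[OF B2'K] by linarith
    then have "insert f (B1-{e}) \<in> Mv V E k n z v" using s_zero[OF B1'K] by simp
    then show "\<exists>f\<in>B2 - B1. insert f (B1 - {e}) \<in> Mv V E k n z v" using f by blast
  qed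
  show ?thesis using part1 part2 unfolding s_def by simp
qed

end
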